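(* Let $(\mathcal{X},d)$ be a metric space, $\mathbb{P}\colon \mathcal{X}\to[0,+\infty)$ a function (a probability density), $\mathcal{S}_\mathbf{x}=\{\mathbf{x}_1,\dots,\mathbf{x}_n\}\subset\mathcal{X}$ a finite point cloud, $\delta\ge 0$, and $\sigma\colon\mathcal{X}\times\mathcal{X}\to(0,+\infty)$ a threshold function. Assume that the Rips graph $R_\delta(\mathcal{S}_\mathbf{x})$ and the $\sigma$-Rips graph $R_{\sigma(\cdot)}(\mathcal{S}_\mathbf{x})$ have the same connected components (as partitions of $\mathcal{S}_\mathbf{x}$). Then \[ d_B^{\infty}\Big(D\mathbf{R}_{\delta}(\mathcal{S}_\mathbf{x},\mathbb{P}),\,D\mathbf{R}_{\sigma(\cdot)}(\mathcal{S}_\mathbf{x},\mathbb{P})\Big)\;\le\;\max_{(\mathbf{x}_i,\mathbf{x}_j)\in\mathcal{S}_\mathbf{x}^2}\big|\alpha_\delta(\mathbf{x}_i,\mathbf{x}_j)-\alpha_{\sigma(\cdot)}(\mathbf{x}_i,\mathbf{x}_j)\big|, \] where $\alpha_\delta(\mathbf{x}_i,\mathbf{x}_j)=\alpha_{\sigma(\cdot)}(\mathbf{x}_i,\mathbf{x}_j)=0$ by convention whenever $\mathbf{x}_i$ and $\mathbf{x}_j$ are not in the same connected component.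
   Context: Rips graph: $R_\delta(\mathcal{S}_\mathbf{x})$ is the graph with vertex set $\mathcal{S}_\mathbf{x}$ and an edge between $\mathbf{x}_i\neq\mathbf{x}_j$ iff $d(\mathbf{x}_i,\mathbf{x}_j)\le\delta$. $\sigma$-Rips graph: $R_{\sigma(\cdot)}(\mathcal{S}_\mathbf{x})$ is the graph with vertex set $\mathcal{S}_\mathbf{x}$ and an edge between $\mathbf{x}_i\neq\mathbf{x}_j$ iff $d(\mathbf{x}_i,\mathbf{x}_j)\le\sigma(\mathbf{x}_i,\mathbf{x}_j)$. For a subset $A\subseteq\mathcal{S}_\mathbf{x}$, $R_\delta(A)$ (resp. $R_{\sigma(\cdot)}(A)$) denotes the same construction on vertex set $A$ (i.e. the induced subgraph). Upper-star filtration and persistence module: for $\alpha\in\overline{\mathbb{R}}=\mathbb{R}\cup\{\pm\infty\}$ let $R_{\delta,\alpha}=R_\delta(\mathcal{S}_\mathbf{x}\cap\mathbb{P}^{-1}([\alpha,+\infty]))$. For $\alpha\le\beta$ there is an inclusion $R_{\delta,\beta}\subseteq R_{\delta,\alpha}$, inducing a linear map $H_0(R_{\delta,\beta})\to H_0(R_{\delta,\alpha})$, where $H_0(G)$ is the vector space (over a fixed field) with basis the connected components of the graph $G$. The family $\mathbf{R}_\delta(\mathcal{S}_\mathbf{x},\mathbb{P})=(H_0(R_{\delta,\alpha}))_{\alpha\in\overline{\mathbb{R}}}$ with these maps is a persistence module (time flows from $+\infty$ to $-\infty$); $\mathbf{R}_{\sigma(\cdot)}(\mathcal{S}_\mathbf{x},\mathbb{P})$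 is defined identically with $R_{\sigma(\cdot)}$ in place of $R_\delta$. Persistence diagram: $D\mathbf{X}$ of such a module is the multiset in $\overline{\mathbb{R}}^2$ consisting of the diagonal $\{(x,x):x\in\overline{\mathbb{R}}\}$ (each point with infinite multiplicity) together with one point $(b,e)$, $e<b$, for each interval-basis element (connected component class) born at level $b$ and dying (merging into an older component, per the elder rule) at level $e$; a component that never dies has $e=-\infty$. Bottleneck distance: for multisets $A_1,A_2\subset\overline{\mathbb{R}}^2$, $d_B^\infty(A_1,A_2)=\inf_{\gamma}\sup_{p\in A_1}\|p-\gamma(p)\|_\infty$, the infimum over multiset bijections $\gamma\colon A_1\to A_2$ (with the convention $|(-\infty)-(-\infty)|=0$). Appearance level: for $\mathbf{x}_i,\mathbf{x}_j\in\mathcal{S}_\mathbf{x}$ in the same connected component of $R_\delta(\mathcal{S}_\mathbf{x})$, $\alpha_\delta(\mathbf{x}_i,\mathbf{x}_j)=\max_{\gamma\in\mathcal{P}(\mathbf{x}_i,\mathbf{x}_j)}\min_{\mathbf{x}\in\gamma}\mathbb{P}(\mathbf{x})$, where $\mathcal{P}(\mathbf{x}_i,\mathbf{x}_j)$ is the set of paths (sequences of vertices with consecutive vertices adjacent) in $R_\delta(\mathcal{S}_\mathbf{x})$ from $\mathbf{x}_i$ to $\mathbf{x}_j$; equivalently, the largest $\alpha$ such that $\mathbf{x}_i,\mathbf{x}_j$ lie in the same connected component of $R_{\delta,\alpha}$. $\alpha_{\sigma(\cdot)}$ is defined identically using paths in $R_{\sigma(\cdot)}(\mathcal{S}_\mathbf{x})$.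 *)

theory Defs
  imports Complex_Main "HOL-Library.Extended_Real"
begin

text \<open>Undirected adjacency: distinct vertices, edge condition for either ordering
  (for a symmetric threshold this is just the edge condition).\<close>
definition adj :: "('a \<Rightarrow> 'a \<Rightarrow> bool) \<Rightarrow> 'a \<Rightarrow> 'a \<Rightarrow> bool" where
  "adj E u v \<longleftrightarrow> u \<noteq> v \<and> (E u v \<or> E v u)"

definition rips_edge :: "real \<Rightarrow> 'a::metric_space \<Rightarrow> 'a \<Rightarrow> bool" where
  "rips_edge \<delta> u v \<longleftrightarrow> dist u v \<le> \<delta>"

definition sigma_rips_edge :: "('a::metric_space \<Rightarrow> 'a \<Rightarrow> real) \<Rightarrow> 'a \<Rightarrow> 'a \<Rightarrow> bool" where
  "sigma_rips_edge \<sigma> u v \<longleftrightarrow> dist u v \<le> \<sigma> u v"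

definition is_path :: "'a set \<Rightarrow> ('a \<Rightarrow> 'a \<Rightarrow> bool) \<Rightarrow> 'a list \<Rightarrow> 'a \<Rightarrow> 'a \<Rightarrow> bool" where
  "is_path V E xs u v \<longleftrightarrow> xs \<noteq> [] \<and> hd xs = u \<and> last xs = v \<and> set xs \<subseteq> V \<and>
     (\<forall>i. Suc i < length xs \<longrightarrow> adj E (xs ! i) (xs ! Suc i))"

definition connected_in :: "'a set \<Rightarrow> ('a \<Rightarrow> 'a \<Rightarrow> bool) \<Rightarrow> 'a \<Rightarrow> 'a \<Rightarrow> bool" where
  "connected_in V E u v \<longleftrightarrow> (\<exists>xs. is_path V E xs u v)"

definition components :: "'a set \<Rightarrow> ('a \<Rightarrow> 'a \<Rightarrow> bool) \<Rightarrow> 'a set set" where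
  "components V E = {{w \<in> V. connected_in V E u w} | u. u \<in> V}"

definition superlevel :: "'a set \<Rightarrow> ('a \<Rightarrow> real) \<Rightarrow> ereal \<Rightarrow> 'a set" where
  "superlevel S P \<alpha> = {x \<in> S. \<alpha> \<le> ereal (P x)}"

definition appearance :: "'a set \<Rightarrow> ('a \<Rightarrow> real) \<Rightarrow> ('a \<Rightarrow> 'a \<Rightarrow> bool) \<Rightarrow> 'a \<Rightarrow> 'a \<Rightarrow> real" where
  "appearance S P E u v =
     (if connected_in S E u v
      then Max {Min (P ` set xs) | xs. is_path S E xs u v}
      else 0)"

text \<open>Total orders ("age") on S refining the filtration: a vertex with larger P is born
  earlier, hence is older (smaller rank). Ties broken arbitrarily; the resulting diagram does
  not depend on the tie-breaking.\<close>
definition elder_ranks :: "'a set \<Rightarrow> ('a \<Rightarrow> real) \<Rightarrow> ('a \<Rightarrow> nat) set" where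
  "elder_ranks S P = {r. inj_on r S \<and> (\<forall>u\<in>S. \<forall>v\<in>S. P v < P u \<longrightarrow> r u < r v)}"

definition elder_rank :: "'a set \<Rightarrow> ('a \<Rightarrow> real) \<Rightarrow> 'a \<Rightarrow> nat" where
  "elder_rank S P = (SOME r. r \<in> elder_ranks S P)"

text \<open>Death level of the class whose oldest vertex is v: the (largest) level at which v's
  component contains an older vertex (merges into an older class); -\<infinity> if never.\<close>
definition death :: "'a set \<Rightarrow> ('a \<Rightarrow> real) \<Rightarrow> ('a \<Rightarrow> 'a \<Rightarrow> bool) \<Rightarrow> 'a \<Rightarrow> ereal" where
  "death S P E v = Sup {\<alpha>. \<exists>u\<in>S. elder_rank S P u < elder_rank S P v \<and>
                                  connected_in (superlevel S P \<alpha>) E u v}"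

text \<open>A persistence diagram as an indexed multiset: the index set and the point map.
  Off-diagonal points (b,e), e<b, are indexed by their oldest vertex; the diagonal
  (each point with infinite multiplicity) is indexed by ereal \<times> nat.\<close>
type_synonym ('a) pd_idx = "'a + ereal \<times> nat"

definition pd_index :: "'a set \<Rightarrow> ('a \<Rightarrow> real) \<Rightarrow> ('a \<Rightarrow> 'a \<Rightarrow> bool) \<Rightarrow> 'a pd_idx set" where
  "pd_index S P E = Inl ` {v \<in> S. death S P E v < ereal (P v)} \<union> range Inr"

definition pd_point :: "'a set \<Rightarrow> ('a \<Rightarrow> real) \<Rightarrow> ('a \<Rightarrow> 'a \<Rightarrow> bool) \<Rightarrow> 'a pd_idx \<Rightarrow> ereal \<times> ereal" where
  "pd_point S P E i = (case i of Inl v \<Rightarrow> (ereal (P v), death S P E v) | Inr (x, n) \<Rightarrow> (x, x))"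

definition persistence_diagram ::
  "'a set \<Rightarrow> ('a \<Rightarrow> real) \<Rightarrow> ('a \<Rightarrow> 'a \<Rightarrow> bool) \<Rightarrow> 'a pd_idx set \<times> ('a pd_idx \<Rightarrow> ereal \<times> ereal)" where
  "persistence_diagram S P E = (pd_index S P E, pd_point S P E)"

text \<open>|a - b| with the convention |(-\<infinity>) - (-\<infinity>)| = 0 (and likewise for +\<infinity>).\<close>
definition ediff :: "ereal \<Rightarrow> ereal \<Rightarrow> ereal" where
  "ediff a b = (if a = b then 0 else \<bar>a - b\<bar>)"

definition linf_dist :: "ereal \<times> ereal \<Rightarrow> ereal \<times> ereal \<Rightarrow> ereal" where
  "linf_dist p q = max (ediff (fst p) (fst q)) (ediff (snd p) (snd q))"

definition bottleneck :: "'i set \<times> ('i \<Rightarrow> ereal \<times> ereal) \<Rightarrow> 'j set \<times> ('j \<Rightarrow> ereal \<times> ereal) \<Rightarrow> ereal" where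
  "bottleneck D1 D2 =
     (INF f \<in> {f. bij_betw f (fst D1) (fst D2)}.
        SUP i \<in> fst D1. linf_dist (snd D1 i) (snd D2 (f i)))"

end

theory Submission
  imports Defs "HOL-Library.Countable_Set"
begin


lemma succ_nth: "(\<forall>i. Suc i < length xs \<longrightarrow> P (xs!i) (xs!Suc i)) \<longleftrightarrow> successively P xs"
proof (induction P xs rule: successively.induct)
  case (3 P x y xs)
  have "(\<forall>i. Suc i < length (x#y#xs) \<longrightarrow> P ((x#y#xs)!i) ((x#y#xs)!Suc i)) \<longleftrightarrow>
        P x y \<and> (\<forall>i. Suc i < length (y#xs) \<longrightarrow> P ((y#xs)!i) ((y#xs)!Suc i))"
    (is "?L \<longleftrightarrow> ?R")
  proof
    assume ?L
    then show ?R by (metis Suc_less_eq length_Cons nth_Cons_0 nth_Cons_Suc zero_less_Suc)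
  next
    assume R: ?R
    show ?L
    proof (intro allI impI)
      fix i assume "Suc i < length (x#y#xs)"
      then show "P ((x#y#xs)!i) ((x#y#xs)!Suc i)" using R by (cases i) auto
    qed
  qed
  then show ?case using 3 by simp
qed auto

lemma is_path_succ: "is_path V E xs u v \<longleftrightarrow> xs \<noteq> [] \<and> hd xs = u \<and> last xs = v \<and> set xs \<subseteq> V \<and> successively (adj E) xs"
  unfolding is_path_def succ_nth ..

lemma adj_sym: "adj E a b = adj E b a" unfolding adj_def by auto

lemma conn_refl: "u \<in> V \<Longrightarrow> connected_in V E u u"
  unfolding connected_in_def is_path_succ by (rule exI[of _ "[u]"]) auto

lemma conn_sym: "connected_in V E u v \<Longrightarrow> connected_in V E v u"
  unfolding connected_in_def is_path_succ
proof -
  assume "\<exists>xs. xs \<noteq> [] \<and> hd xs = u \<and> last xs = v \<and> set xs \<subseteq> V \<and> successively (adj E) xs"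
  then obtain xs where "xs \<noteq> []" "hd xs = u" "last xs = v" "set xs \<subseteq> V" "successively (adj E) xs" by blast
  then show "\<exists>xs. xs \<noteq> [] \<and> hd xs = v \<and> last xs = u \<and> set xs \<subseteq> V \<and> successively (adj E) xs"
    by (intro exI[of _ "rev xs"]) (auto simp: hd_rev last_rev adj_sym)
qed

lemma conn_trans: "connected_in V E u v \<Longrightarrow> connected_in V E v w \<Longrightarrow> connected_in V E u w"
  unfolding connected_in_def is_path_succ
proof -
  assume "\<exists>xs. xs \<noteq> [] \<and> hd xs = u \<and> last xs = v \<and> set xs \<subseteq> V \<and> successively (adj E) xs"
    "\<exists>xs. xs \<noteq> [] \<and> hd xs = v \<and> last xs = w \<and> set xs \<subseteq> V \<and> successively (adj E) xs"
  then obtain xs ys where x: "xs \<noteq> []" "hd xs = u" "last xs = v" "set xs \<subseteq> V" "successively (adj E) xs"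
    and y: "ys \<noteq> []" "hd ys = v" "last ys = w" "set ys \<subseteq> V" "successively (adj E) ys" by blast
  then obtain zs where ys: "ys = v # zs" by (cases ys) auto
  have "successively (adj E) (xs @ zs)"
    using x y ys by (auto simp: successively_append_iff successively_Cons)
  then show "\<exists>xs. xs \<noteq> [] \<and> hd xs = u \<and> last xs = w \<and> set xs \<subseteq> V \<and> successively (adj E) xs"
    using x y ys by (intro exI[of _ "xs @ zs"]) auto
qed

lemma conn_in: "connected_in V E u v \<Longrightarrow> u \<in> V \<and> v \<in> V"
proof -
  assume "connected_in V E u v"
  then obtain xs where xs: "is_path V E xs u v" unfolding connected_in_def by blast
  then have "xs \<noteq> []" "hd xs = u" "last xs = v" "set xs \<subseteq> V" unfolding is_path_def by auto
  then show ?thesis using hd_in_set last_in_set by blast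
qed

lemma comp_conn:
  assumes "components S E1 = components S E2" "u \<in> S"
  shows "connected_in S E1 u w \<longleftrightarrow> connected_in S E2 u w"
proof -
  have "{w \<in> S. connected_in S E1 u w} \<in> components S E1"
    unfolding components_def using assms(2) by blast
  then have "{w \<in> S. connected_in S E1 u w} \<in> components S E2" using assms(1) by simp
  then obtain u' where u': "u' \<in> S" "{w \<in> S. connected_in S E1 u w} = {w \<in> S. connected_in S E2 u' w}"
    unfolding components_def by blast
  have "u \<in> {w \<in> S. connected_in S E1 u w}" using assms(2) conn_refl[of u S E1] by simp
  then have c: "connected_in S E2 u' u" using u'(2) by simp
  have "connected_in S E1 u w \<longleftrightarrow> w \<in> {w \<in> S. connected_in S E1 u w}" using conn_in[of S E1 u w] by auto
  also have "\<dots> \<longleftrightarrow> w \<in> {w \<in> S. connected_in S E2 u' w}" using u'(2) by simp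
  also have "\<dots> \<longleftrightarrow> connected_in S E2 u w"
  proof
    assume "w \<in> {w \<in> S. connected_in S E2 u' w}"
    then have "connected_in S E2 u' w" by simp
    then show "connected_in S E2 u w" by (rule conn_trans[OF conn_sym[OF c]])
  next
    assume a: "connected_in S E2 u w"
    then show "w \<in> {w \<in> S. connected_in S E2 u' w}" using conn_trans[OF c a] conn_in[OF a] by simp
  qed
  finally show ?thesis .
qed




lemma app_set_fin: assumes "finite S" shows "finite {Min (P ` set xs) | xs. is_path S E xs u v}"
proof (rule finite_subset[of _ "P ` S"])
  show "{Min (P ` set xs) | xs. is_path S E xs u v} \<subseteq> P ` S"
  proof
    fix y assume "y \<in> {Min (P ` set xs) | xs. is_path S E xs u v}"
    then obtain xs where xs: "y = Min (P ` set xs)" "is_path S E xs u v" by blast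
    then have ne: "xs \<noteq> []" "set xs \<subseteq> S" unfolding is_path_def by auto
    have "Min (P ` set xs) \<in> P ` set xs" using ne by (intro Min_in) auto
    then show "y \<in> P ` S" using xs(1) ne by blast
  qed
qed (use assms in simp)

lemma app_attained:
  assumes "finite S" "connected_in S E u v"
  shows "\<exists>xs. is_path S E xs u v \<and> appearance S P E u v = Min (P ` set xs)"
proof -
  have ne: "{Min (P ` set xs) | xs. is_path S E xs u v} \<noteq> {}" using assms(2) unfolding connected_in_def by blast
  have "appearance S P E u v \<in> {Min (P ` set xs) | xs. is_path S E xs u v}"
    unfolding appearance_def using assms(2) Max_in[OF app_set_fin[OF assms(1)] ne] by simp
  then show ?thesis by blast
qed

lemma app_ge:
  assumes "finite S" "is_path S E xs u v"
  shows "Min (P ` set xs) \<le> appearance S P E u v"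
proof -
  have "connected_in S E u v" using assms(2) unfolding connected_in_def by blast
  moreover have "Min (P ` set xs) \<in> {Min (P ` set xs) | xs. is_path S E xs u v}" using assms(2) by blast
  ultimately show ?thesis unfolding appearance_def using Max_ge[OF app_set_fin[OF assms(1), of P E u v]] by simp
qed

lemma app_le_v:
  assumes "finite S" "connected_in S E u v"
  shows "appearance S P E u v \<le> P v"
proof -
  obtain xs where "is_path S E xs u v" "appearance S P E u v = Min (P ` set xs)"
    using app_attained[OF assms] by blast
  then have "v \<in> set xs" unfolding is_path_def using last_in_set by blast
  then show ?thesis using \<open>appearance S P E u v = Min (P ` set xs)\<close> by simp
qed

lemma super_conn:
  assumes "finite S"
  shows "connected_in (superlevel S P \<alpha>) E u v \<longleftrightarrow> connected_in S E u v \<and> \<alpha> \<le> ereal (appearance S P E u v)"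
proof
  assume "connected_in (superlevel S P \<alpha>) E u v"
  then obtain xs where xs: "is_path (superlevel S P \<alpha>) E xs u v" unfolding connected_in_def by blast
  then have p: "is_path S E xs u v" unfolding is_path_def superlevel_def by auto
  have "xs \<noteq> []" using xs unfolding is_path_def by blast
  then have "Min (P ` set xs) \<in> P ` set xs" by (intro Min_in) auto
  then obtain y where "y \<in> set xs" "Min (P ` set xs) = P y" by auto
  then have "\<alpha> \<le> ereal (Min (P ` set xs))" using xs unfolding is_path_def superlevel_def by auto
  also have "\<dots> \<le> ereal (appearance S P E u v)" using app_ge[OF assms p] by simp
  finally show "connected_in S E u v \<and> \<alpha> \<le> ereal (appearance S P E u v)"
    using p unfolding connected_in_def by blast
next
  assume a: "connected_in S E u v \<and> \<alpha> \<le> ereal (appearance S P E u v)"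
  then obtain xs where xs: "is_path S E xs u v" "appearance S P E u v = Min (P ` set xs)"
    using app_attained[OF assms] by blast
  have "\<forall>y\<in>set xs. \<alpha> \<le> ereal (P y)"
  proof
    fix y assume "y \<in> set xs"
    then have "Min (P ` set xs) \<le> P y" by (intro Min_le) auto
    then show "\<alpha> \<le> ereal (P y)" using a xs(2) order_trans by fastforce
  qed
  then have "is_path (superlevel S P \<alpha>) E xs u v" using xs(1) unfolding is_path_def superlevel_def by auto
  then show "connected_in (superlevel S P \<alpha>) E u v" unfolding connected_in_def by blast
qed

lemma death_eq:
  assumes "finite S"
  shows "death S P E v = Sup ((\<lambda>u. ereal (appearance S P E u v)) `
            {u\<in>S. elder_rank S P u < elder_rank S P v \<and> connected_in S E u v})"
  (is "_ = Sup (?g ` ?O)")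
proof -
  have "death S P E v = Sup {\<alpha>. \<exists>u\<in>?O. \<alpha> \<le> ?g u}"
    unfolding death_def super_conn[OF assms] by (rule arg_cong[where f=Sup]) auto
  also have "\<dots> = Sup (?g ` ?O)"
  proof (rule antisym)
    show "Sup {\<alpha>. \<exists>u\<in>?O. \<alpha> \<le> ?g u} \<le> Sup (?g ` ?O)"
      by (rule Sup_least) (auto intro: order_trans SUP_upper)
    show "Sup (?g ` ?O) \<le> Sup {\<alpha>. \<exists>u\<in>?O. \<alpha> \<le> ?g u}"
      by (rule SUP_least, rule Sup_upper) auto
  qed
  finally show ?thesis .
qed




lemma glue:
  assumes "\<And>x. bij_betw (g x) {i\<in>D. l1 i = x} {j\<in>E. l2 j = x}"
  shows "bij_betw (\<lambda>i. g (l1 i) i) D E"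
  unfolding bij_betw_def
proof
  have m: "i \<in> D \<Longrightarrow> g (l1 i) i \<in> E \<and> l2 (g (l1 i) i) = l1 i" for i
    using assms[of "l1 i"] unfolding bij_betw_def by blast
  show "inj_on (\<lambda>i. g (l1 i) i) D"
  proof (rule inj_onI)
    fix i j assume ij: "i \<in> D" "j \<in> D" "g (l1 i) i = g (l1 j) j"
    then have "l1 i = l1 j" using m by metis
    then show "i = j" using ij assms[of "l1 i"] unfolding bij_betw_def inj_on_def by auto
  qed
  show "(\<lambda>i. g (l1 i) i) ` D = E"
  proof
    show "(\<lambda>i. g (l1 i) i) ` D \<subseteq> E" using m by blast
    show "E \<subseteq> (\<lambda>i. g (l1 i) i) ` D"
    proof
      fix j assume "j \<in> E"
      then have "j \<in> g (l2 j) ` {i\<in>D. l1 i = l2 j}" using assms[of "l2 j"] unfolding bij_betw_def by blast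
      then obtain i where "i \<in> D" "l1 i = l2 j" "j = g (l2 j) i" by blast
      then show "j \<in> (\<lambda>i. g (l1 i) i) ` D" by force
    qed
  qed
qed

lemma max_diff:
  fixes f g :: "'b \<Rightarrow> real"
  assumes "finite Os" "Os \<noteq> {}" "\<And>u. u \<in> Os \<Longrightarrow> \<bar>f u - g u\<bar> \<le> M"
  shows "\<bar>Max (f ` Os) - Max (g ` Os)\<bar> \<le> M"
proof -
  have a: "Max (f ` Os) - Max (g ` Os) \<le> M" if "\<And>u. u \<in> Os \<Longrightarrow> \<bar>f u - g u\<bar> \<le> M" for f g :: "'b \<Rightarrow> real"
  proof -
    have "Max (f ` Os) \<in> f ` Os" using assms(1,2) by (intro Max_in) auto
    then obtain u where u: "u \<in> Os" "Max (f ` Os) = f u" by auto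
    have "g u \<le> Max (g ` Os)" using u assms(1) by auto
    then show ?thesis using u that[of u] by linarith
  qed
  show ?thesis using a[of f g] a[of g f] assms(3) by (fastforce simp: abs_minus_commute)
qed

lemma sup_fin:
  fixes f :: "'b \<Rightarrow> real"
  assumes "finite Os" "Os \<noteq> {}"
  shows "Sup ((\<lambda>u. ereal (f u)) ` Os) = ereal (Max (f ` Os))"
proof (rule antisym)
  show "Sup ((\<lambda>u. ereal (f u)) ` Os) \<le> ereal (Max (f ` Os))"
    using assms by (intro SUP_least) auto
  have "Max (f ` Os) \<in> f ` Os" using assms by (intro Max_in) auto
  then obtain u where u: "u \<in> Os" "Max (f ` Os) = f u" by auto
  then show "ereal (Max (f ` Os)) \<le> Sup ((\<lambda>u. ereal (f u)) ` Os)"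
    by (metis SUP_upper)
qed

lemma cost:
  assumes "0 \<le> M"
    and "e1 = x \<or> (\<exists>r t. x = ereal r \<and> e1 = ereal t \<and> r - M \<le> t \<and> t \<le> r)"
    and "e2 = x \<or> (\<exists>r t. x = ereal r \<and> e2 = ereal t \<and> r - M \<le> t \<and> t \<le> r)"
  shows "linf_dist (x, e1) (x, e2) \<le> ereal M"
  using assms unfolding linf_dist_def ediff_def
  by (auto simp: abs_real_def split: if_splits)




theorem theorem1:
  fixes S :: "'a::metric_space set" and P :: "'a \<Rightarrow> real"
    and \<delta> :: real and \<sigma> :: "'a \<Rightarrow> 'a \<Rightarrow> real"
  assumes "finite S" and "S \<noteq> {}"
    and "\<forall>x. 0 \<le> P x"
    and "0 \<le> \<delta>"
    and "\<forall>x y. 0 < \<sigma> x y"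
    and "components S (rips_edge \<delta>) = components S (sigma_rips_edge \<sigma>)"
  shows "bottleneck (persistence_diagram S P (rips_edge \<delta>))
                    (persistence_diagram S P (sigma_rips_edge \<sigma>))
         \<le> ereal (Max {\<bar>appearance S P (rips_edge \<delta>) u v - appearance S P (sigma_rips_edge \<sigma>) u v\<bar>
                       | u v. u \<in> S \<and> v \<in> S})"
proof -
  define E1 :: "'a \<Rightarrow> 'a \<Rightarrow> bool" where "E1 = rips_edge \<delta>"
  define E2 :: "'a \<Rightarrow> 'a \<Rightarrow> bool" where "E2 = sigma_rips_edge \<sigma>"
  define M where "M = Max {\<bar>appearance S P E1 u v - appearance S P E2 u v\<bar> | u v. u \<in> S \<and> v \<in> S}"
  have fin: "finite S" by fact
  have Mset: "{\<bar>appearance S P E1 u v - appearance S P E2 u v\<bar> | u v. u \<in> S \<and> v \<in> S}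
      = (\<lambda>(u,v). \<bar>appearance S P E1 u v - appearance S P E2 u v\<bar>) ` (S \<times> S)" by auto
  have Mfin: "finite {\<bar>appearance S P E1 u v - appearance S P E2 u v\<bar> | u v. u \<in> S \<and> v \<in> S}"
    unfolding Mset using fin by auto
  have Mge: "\<bar>appearance S P E1 u v - appearance S P E2 u v\<bar> \<le> M" if "u \<in> S" "v \<in> S" for u v
    unfolding M_def using that by (intro Max_ge[OF Mfin]) blast
  obtain s where "s \<in> S" using assms(2) by blast
  then have M0: "0 \<le> M" using Mge[of s s] by linarith
  have cc: "connected_in S E1 u w \<longleftrightarrow> connected_in S E2 u w" if "u \<in> S" for u w
    using comp_conn[OF assms(6) that] unfolding E1_def E2_def .
  define r where "r = elder_rank S P"
  define Os where "Os v = {u\<in>S. r u < r v \<and> connected_in S E1 u v}" for v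
  have O2: "{u\<in>S. r u < r v \<and> connected_in S E2 u v} = Os v" for v
    unfolding Os_def using cc by blast
  define d1 where "d1 = death S P E1"
  define d2 where "d2 = death S P E2"
  have d1e: "d1 v = Sup ((\<lambda>u. ereal (appearance S P E1 u v)) ` Os v)" for v
    unfolding d1_def death_eq[OF fin] Os_def r_def ..
  have d2e: "d2 v = Sup ((\<lambda>u. ereal (appearance S P E2 u v)) ` Os v)" for v
    unfolding d2_def death_eq[OF fin] O2[symmetric] r_def ..
  have Ofin: "finite (Os v)" for v unfolding Os_def using fin by auto
  have d1le: "d1 v \<le> ereal (P v)" for v
    unfolding d1e Os_def using app_le_v[OF fin] by (intro SUP_least) auto
  have d2le: "d2 v \<le> ereal (P v)" for v
    unfolding d2e O2[symmetric] using app_le_v[OF fin] by (intro SUP_least) auto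
  have dprop: "(d1 v = -\<infinity> \<and> d2 v = -\<infinity>) \<or> (\<exists>t1 t2. d1 v = ereal t1 \<and> d2 v = ereal t2 \<and> \<bar>t1 - t2\<bar> \<le> M)" for v
  proof (cases "Os v = {}")
    case True
    have "d1 v = -\<infinity>" unfolding d1e True by (simp add: bot_ereal_def)
    moreover have "d2 v = -\<infinity>" unfolding d2e True by (simp add: bot_ereal_def)
    ultimately show ?thesis by (rule disjI1[OF conjI])
  next
    case False
    have md: "\<bar>Max ((\<lambda>u. appearance S P E1 u v) ` Os v) - Max ((\<lambda>u. appearance S P E2 u v) ` Os v)\<bar> \<le> M"
    proof (rule max_diff[OF Ofin False])
      fix u assume "u \<in> Os v"
      then have u: "u \<in> S" "connected_in S E1 u v" unfolding Os_def by auto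
      then have "v \<in> S" using conn_in[of S E1 u v] by simp
      with u(1) show "\<bar>appearance S P E1 u v - appearance S P E2 u v\<bar> \<le> M" by (rule Mge)
    qed
    have e1: "d1 v = ereal (Max ((\<lambda>u. appearance S P E1 u v) ` Os v))"
      unfolding d1e by (rule sup_fin[OF Ofin False])
    have e2: "d2 v = ereal (Max ((\<lambda>u. appearance S P E2 u v) ` Os v))"
      unfolding d2e by (rule sup_fin[OF Ofin False])
    show ?thesis using e1 e2 md by blast
  qed
  define K1 where "K1 = {v\<in>S. d1 v < ereal (P v)}"
  define K2 where "K2 = {v\<in>S. d2 v < ereal (P v)}"
  define C where "C = K1 \<inter> K2"
  define A where "A = K1 - K2"
  define B where "B = K2 - K1"
  define lev :: "'a pd_idx \<Rightarrow> ereal" where "lev i = (case i of Inl v \<Rightarrow> ereal (P v) | Inr (x, n) \<Rightarrow> x)" for i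
  define D :: "'a pd_idx set" where "D = Inl ` A \<union> range Inr"
  define Ee :: "'a pd_idx set" where "Ee = Inl ` B \<union> range Inr"
  have I1: "pd_index S P E1 = Inl ` C \<union> D" unfolding pd_index_def D_def C_def A_def K1_def d1_def by auto
  have I2: "pd_index S P E2 = Inl ` C \<union> Ee" unfolding pd_index_def Ee_def C_def B_def K2_def d2_def by auto
  have fiber: "countable {i\<in>Inl ` X \<union> range Inr. lev i = x} \<and> infinite {i\<in>Inl ` X \<union> range Inr. lev i = x}"
    if "X \<subseteq> S" for X and x
  proof
    have "{i\<in>Inl ` X \<union> range Inr. lev i = x} \<subseteq> Inl ` S \<union> range (\<lambda>n. Inr (x, n))"
      using that unfolding lev_def by auto
    moreover have "countable (Inl ` S \<union> range (\<lambda>n. Inr (x, n)) :: 'a pd_idx set)"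
      using fin by (simp add: countable_finite)
    ultimately show "countable {i\<in>Inl ` X \<union> range Inr. lev i = x}" using countable_subset by blast
    have "range (\<lambda>n. Inr (x, n)) \<subseteq> {i\<in>Inl ` X \<union> range Inr. lev i = x}" unfolding lev_def by auto
    moreover have "infinite (range (\<lambda>n. Inr (x, n) :: 'a pd_idx))"
      by (rule range_inj_infinite) (auto simp: inj_def)
    ultimately show "infinite {i\<in>Inl ` X \<union> range Inr. lev i = x}" using infinite_super by blast
  qed
  define g where "g x = from_nat_into {j\<in>Ee. lev j = x} \<circ> inv_into UNIV (from_nat_into {i\<in>D. lev i = x})" for x
  have gb: "bij_betw (g x) {i\<in>D. lev i = x} {j\<in>Ee. lev j = x}" for x
  proof -
    have "A \<subseteq> S" "B \<subseteq> S" unfolding A_def B_def K1_def K2_def by auto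
    then have "countable {i\<in>D. lev i = x}" "infinite {i\<in>D. lev i = x}"
      "countable {j\<in>Ee. lev j = x}" "infinite {j\<in>Ee. lev j = x}"
      using fiber unfolding D_def Ee_def by blast+
    then have b1: "bij_betw (from_nat_into {i\<in>D. lev i = x}) UNIV {i\<in>D. lev i = x}"
      and b2: "bij_betw (from_nat_into {j\<in>Ee. lev j = x}) UNIV {j\<in>Ee. lev j = x}"
      by (auto intro: bij_betw_from_nat_into)
    show ?thesis unfolding g_def
      by (rule bij_betw_trans[OF bij_betw_inv_into[OF b1] b2])
  qed
  define h where "h i = g (lev i) i" for i
  have hb: "bij_betw h D Ee" unfolding h_def by (rule glue[OF gb])
  have hlev: "i \<in> D \<Longrightarrow> h i \<in> Ee \<and> lev (h i) = lev i" for i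
    using gb[of "lev i"] unfolding h_def bij_betw_def by blast
  define F where "F i = (if i \<in> Inl ` C then i else h i)" for i
  have Fb: "bij_betw F (pd_index S P E1) (pd_index S P E2)"
    unfolding I1 I2
  proof (rule bij_betw_combine)
    show "bij_betw F (Inl ` C) (Inl ` C)" unfolding F_def by (simp add: bij_betw_def inj_on_def)
    have "D \<inter> Inl ` C = {}" unfolding D_def A_def C_def by auto
    then show "bij_betw F D Ee" using hb unfolding F_def
      by (rule_tac bij_betw_cong[THEN iffD1, OF _ hb]) auto
    show "Inl ` C \<inter> Ee = {}" unfolding Ee_def B_def C_def by auto
  qed
  have Q1: "fst (pd_point S P E1 i) = lev i \<and> (snd (pd_point S P E1 i) = lev i \<or>
      (\<exists>r t. lev i = ereal r \<and> snd (pd_point S P E1 i) = ereal t \<and> r - M \<le> t \<and> t \<le> r))" if "i \<in> D" for i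
  proof (cases i)
    case (Inl v)
    then have v: "v \<in> A" using that unfolding D_def by auto
    then have "d1 v < ereal (P v)" "d2 v = ereal (P v)" using d2le[of v] unfolding A_def K1_def K2_def by auto
    then obtain t1 where "d1 v = ereal t1" "\<bar>t1 - P v\<bar> \<le> M" "t1 < P v" using dprop[of v] by auto
    then show ?thesis unfolding Inl pd_point_def lev_def d1_def by auto
  next
    case (Inr p) then show ?thesis unfolding pd_point_def lev_def by (cases p) auto
  qed
  have Q2: "fst (pd_point S P E2 i) = lev i \<and> (snd (pd_point S P E2 i) = lev i \<or>
      (\<exists>r t. lev i = ereal r \<and> snd (pd_point S P E2 i) = ereal t \<and> r - M \<le> t \<and> t \<le> r))" if "i \<in> Ee" for i
  proof (cases i)
    case (Inl v)
    then have v: "v \<in> B" using that unfolding Ee_def by auto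
    then have "d2 v < ereal (P v)" "d1 v = ereal (P v)" using d1le[of v] unfolding B_def K1_def K2_def by auto
    then obtain t2 where "d2 v = ereal t2" "\<bar>P v - t2\<bar> \<le> M" "t2 < P v" using dprop[of v] by auto
    then show ?thesis unfolding Inl pd_point_def lev_def d2_def by auto
  next
    case (Inr p) then show ?thesis unfolding pd_point_def lev_def by (cases p) auto
  qed
  have costb: "linf_dist (pd_point S P E1 i) (pd_point S P E2 (F i)) \<le> ereal M"
    if "i \<in> pd_index S P E1" for i
  proof (cases "i \<in> Inl ` C")
    case True
    then obtain v where v: "i = Inl v" by blast
    have "F i = i" using True F_def by simp
    moreover have "ediff (d1 v) (d2 v) \<le> ereal M"
      using dprop[of v] M0 unfolding ediff_def by auto
    moreover have "ediff (ereal (P v)) (ereal (P v)) = 0" by (simp add: ediff_def)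
    ultimately show ?thesis using M0 unfolding v pd_point_def linf_dist_def d1_def d2_def by simp
  next
    case False
    then have iD: "i \<in> D" using that I1 by blast
    have Fi: "F i = h i" using False F_def by simp
    obtain x1 e1 where p1: "pd_point S P E1 i = (x1, e1)" by fastforce
    obtain x2 e2 where p2: "pd_point S P E2 (h i) = (x2, e2)" by fastforce
    have "x1 = lev i" "x2 = lev i" using Q1[OF iD] Q2[of "h i"] hlev[OF iD] p1 p2 by auto
    then show ?thesis unfolding Fi p1 p2
      using cost[OF M0, of e1 "lev i" e2] Q1[OF iD] Q2[of "h i"] hlev[OF iD] p1 p2 by auto
  qed
  have "bottleneck (persistence_diagram S P E1) (persistence_diagram S P E2)
      \<le> (SUP i \<in> pd_index S P E1. linf_dist (pd_point S P E1 i) (pd_point S P E2 (F i)))"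
    unfolding bottleneck_def persistence_diagram_def fst_conv snd_conv
    by (rule INF_lower) (use Fb in simp)
  also have "\<dots> \<le> ereal M" using costb by (rule SUP_least)
  finally show ?thesis unfolding M_def E1_def E2_def .
qed


end
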